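(* Convolution $(\sigma,\tau)\mapsto\sigma*\tau$ is a separately continuous map from $\mathcal T\times\mathcal T$ to $\mathcal T$.
   Context: Standing setting: $(X,\|\cdot\|)$ is a separable infinite-dimensional Banach space and $d$ is a translation-invariant stable pseudometric on $X$ such that $\mathrm{Id}\colon(X,\|\cdot\|)\to(X,d)$ is a coarse equivalence ($\omega_{\mathrm{Id}}(t)=\sup\{d(x,y):\|x-y\|\le t\}<\infty$ for all $t$, $\rho_{\mathrm{Id}}(t)=\inf\{d(x,y):\|x-y\|\ge t\}\to\infty$). $\Delta$ is a countable $\|\cdot\|$-dense $\mathbb Q$-linear subspace of $X$; for $x\in\Delta$, $\bar x(\lambda,y)=d(\lambda x,y)$. $\mathcal T$ is the closure of $\{\bar x:x\in\Delta\}$ in $\mathbb R^{\mathbb Q\times\Delta}$ (pointwise topology); a defining sequence for $\sigma\in\mathcal T$ is $(x_n)\subseteq\Delta$ with $\bar x_n\to\sigma$. For $\sigma,\tau\in\mathcal T$ with defining sequences $(x_n),(y_m)$, the convolution is $\sigma*\tau=\lim_n\lim_m\overline{x_n+y_m}$ (this exists and is independent of the defining sequences). *)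

theory Defs
  imports "HOL-Analysis.Analysis"
begin

definition pseudometric :: "('a \<Rightarrow> 'a \<Rightarrow> real) \<Rightarrow> bool" where
  "pseudometric d \<longleftrightarrow> (\<forall>x. d x x = 0) \<and> (\<forall>x y. d x y = d y x)
      \<and> (\<forall>x y z. d x z \<le> d x y + d y z)"

definition translation_invariant :: "('a::real_normed_vector \<Rightarrow> 'a \<Rightarrow> real) \<Rightarrow> bool" where
  "translation_invariant d \<longleftrightarrow> (\<forall>x y z. d (x + z) (y + z) = d x y)"

definition stable_pseudometric :: "('a::real_normed_vector \<Rightarrow> 'a \<Rightarrow> real) \<Rightarrow> bool" where
  "stable_pseudometric d \<longleftrightarrow>
     (\<forall>(x::nat \<Rightarrow> 'a) (y::nat \<Rightarrow> 'a) a b.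
        bounded (range x) \<and> bounded (range y) \<and>
        (\<exists>f. (\<forall>n. (\<lambda>m. d (x n) (y m)) \<longlonglongrightarrow> f n) \<and> f \<longlonglongrightarrow> a) \<and>
        (\<exists>g. (\<forall>m. (\<lambda>n. d (x n) (y m)) \<longlonglongrightarrow> g m) \<and> g \<longlonglongrightarrow> b)
        \<longrightarrow> a = b)"

definition omega_Id :: "('a::real_normed_vector \<Rightarrow> 'a \<Rightarrow> real) \<Rightarrow> real \<Rightarrow> real" where
  "omega_Id d t = Sup {d x y | x y. norm (x - y) \<le> t}"

definition rho_Id :: "('a::real_normed_vector \<Rightarrow> 'a \<Rightarrow> real) \<Rightarrow> real \<Rightarrow> real" where
  "rho_Id d t = Inf {d x y | x y. norm (x - y) \<ge> t}"

definition coarse_equivalence_Id :: "('a::real_normed_vector \<Rightarrow> 'a \<Rightarrow> real) \<Rightarrow> bool" where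
  "coarse_equivalence_Id d \<longleftrightarrow>
     (\<forall>t. bdd_above {d x y | x y. norm (x - y) \<le> t}) \<and> filterlim (rho_Id d) at_top at_top"

definition Q_linear_subspace :: "'a::real_vector set \<Rightarrow> bool" where
  "Q_linear_subspace D \<longleftrightarrow> 0 \<in> D \<and> (\<forall>x\<in>D. \<forall>y\<in>D. x + y \<in> D)
      \<and> (\<forall>x\<in>D. \<forall>q::rat. of_rat q *\<^sub>R x \<in> D)"

text \<open>The function xbar(lambda,y) = d(lambda x, y) on Q \<times> Delta, as an element of
  R^(Q \<times> Delta) (coordinates outside Q \<times> Delta are set to 0 and play no role).
  The function space carries the product (pointwise) topology.\<close>
definition xbar :: "('a::real_normed_vector \<Rightarrow> 'a \<Rightarrow> real) \<Rightarrow> 'a set \<Rightarrow> 'a \<Rightarrow> (rat \<times> 'a \<Rightarrow> real)" where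
  "xbar d D x = (\<lambda>(q, y). if y \<in> D then d (of_rat q *\<^sub>R x) y else 0)"

definition types_space :: "('a::real_normed_vector \<Rightarrow> 'a \<Rightarrow> real) \<Rightarrow> 'a set \<Rightarrow> (rat \<times> 'a \<Rightarrow> real) set" where
  "types_space d D = closure (xbar d D ` D)"

definition defining_seq :: "('a::real_normed_vector \<Rightarrow> 'a \<Rightarrow> real) \<Rightarrow> 'a set \<Rightarrow> (rat \<times> 'a \<Rightarrow> real) \<Rightarrow> (nat \<Rightarrow> 'a) \<Rightarrow> bool" where
  "defining_seq d D \<sigma> x \<longleftrightarrow> (\<forall>n. x n \<in> D) \<and> (\<lambda>n. xbar d D (x n)) \<longlonglongrightarrow> \<sigma>"

definition conv :: "('a::real_normed_vector \<Rightarrow> 'a \<Rightarrow> real) \<Rightarrow> 'a set \<Rightarrow> (rat \<times> 'a \<Rightarrow> real) \<Rightarrow> (rat \<times> 'a \<Rightarrow> real) \<Rightarrow> (rat \<times> 'a \<Rightarrow> real)" where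
  "conv d D \<sigma> \<tau> = (THE \<rho>. \<forall>x y. defining_seq d D \<sigma> x \<and> defining_seq d D \<tau> y \<longrightarrow>
      (\<exists>f. (\<forall>n. (\<lambda>m. xbar d D (x n + y m)) \<longlonglongrightarrow> f n) \<and> f \<longlonglongrightarrow> \<rho>))"

end

theory Submission
  imports Defs
begin


lemma subseq_lim:
  fixes F :: "nat \<Rightarrow> real"
  assumes "bounded (range F)" "\<And>r \<alpha>. strict_mono r \<Longrightarrow> (F \<circ> r) \<longlonglongrightarrow> \<alpha> \<Longrightarrow> \<alpha> = \<beta>"
  shows "F \<longlonglongrightarrow> \<beta>"
proof (rule ccontr)
  assume "\<not> F \<longlonglongrightarrow> \<beta>"
  then obtain e where e: "e > 0" and ne: "\<not> eventually (\<lambda>n. dist (F n) \<beta> < e) sequentially"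
    unfolding tendsto_iff by blast
  then obtain r :: "nat \<Rightarrow> nat" where r: "strict_mono r" and rn: "\<forall>n. \<not> dist (F (r n)) \<beta> < e"
    using not_eventually_sequentiallyD[OF ne] by blast
  have "bounded (range (F \<circ> r))" using assms(1) by (rule bounded_subset) auto
  then obtain l s where s: "strict_mono s" and l: "((F \<circ> r) \<circ> s) \<longlonglongrightarrow> l"
    using bounded_imp_convergent_subsequence by blast
  have "l = \<beta>" using assms(2)[of "r \<circ> s" l] l r s by (simp add: strict_mono_o o_assoc)
  then have "eventually (\<lambda>n. dist (((F \<circ> r) \<circ> s) n) \<beta> < e) sequentially"
    using l e tendsto_iff by blast
  then obtain n where "dist (((F \<circ> r) \<circ> s) n) \<beta> < e" by (meson eventually_sequentially order_refl)
  then show False using rn by simp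
qed

lemma d_nonneg: "pseudometric d \<Longrightarrow> 0 \<le> d x y"
proof -
  assume "pseudometric d"
  then have "d x x \<le> d x y + d y x" "d x x = 0" "d y x = d x y" unfolding pseudometric_def by blast+
  then show ?thesis by linarith
qed

lemma d_sym: "pseudometric d \<Longrightarrow> d x y = d y x"
  unfolding pseudometric_def by blast

lemma d_shift:
  fixes d :: "'a::real_normed_vector \<Rightarrow> 'a \<Rightarrow> real"
  assumes "translation_invariant d"
  shows "d (a + c) b = d a (b - c)"
  using assms unfolding translation_invariant_def
  by (metis add_diff_cancel diff_add_cancel)

lemma bounded_of_dbound:
  fixes d :: "'a::real_normed_vector \<Rightarrow> 'a \<Rightarrow> real"
  assumes pm: "pseudometric d" and ce: "coarse_equivalence_Id d" and B: "\<And>n. d (x n) z \<le> B"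
  shows "bounded (range x)"
proof -
  have "filterlim (rho_Id d) at_top at_top" using ce unfolding coarse_equivalence_Id_def by blast
  then have "eventually (\<lambda>t. B + 1 \<le> rho_Id d t) at_top" by (simp add: filterlim_at_top)
  then obtain t0 where t0: "\<And>t. t \<ge> t0 \<Longrightarrow> B + 1 \<le> rho_Id d t" by (auto simp: eventually_at_top_linorder)
  have "norm (x n - z) < t0" for n
  proof (rule ccontr)
    assume "\<not> norm (x n - z) < t0"
    then have "d (x n) z \<in> {d x y | x y. norm (x - y) \<ge> t0}" by (auto simp: not_less)
    moreover have "bdd_below {d x y | x y. norm (x - y) \<ge> t0}"
      using d_nonneg[OF pm] by (auto intro!: bdd_belowI[where m=0])
    ultimately have "rho_Id d t0 \<le> d (x n) z" unfolding rho_Id_def by (rule cInf_lower)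
    then show False using t0[of t0] B[of n] by linarith
  qed
  then have "norm (x n) \<le> t0 + norm z" for n
    by (smt (verit, ccfv_SIG) norm_triangle_ineq4 norm_diff_triangle_ineq norm_triangle_sub)
  then show ?thesis unfolding bounded_iff by blast
qed

lemma d_bdd:
  fixes d :: "'a::real_normed_vector \<Rightarrow> 'a \<Rightarrow> real"
  assumes ce: "coarse_equivalence_Id d" and u: "bounded (range u)" and v: "bounded (range v)"
  shows "\<exists>M. \<forall>n m. d (u n) (v m) \<le> M"
proof -
  obtain a where a: "\<And>n. norm (u n) \<le> a" using u unfolding bounded_iff by blast
  obtain b where b: "\<And>n. norm (v n) \<le> b" using v unfolding bounded_iff by blast
  obtain M where M: "\<And>w. w \<in> {d x y | x y. norm (x - y) \<le> a + b} \<Longrightarrow> w \<le> M"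
    using ce unfolding coarse_equivalence_Id_def bdd_above_def by blast
  have "norm (u n - v m) \<le> a + b" for n m
    by (smt (verit) a b norm_triangle_ineq4)
  then show ?thesis using M by blast
qed

lemma lim_bounds:
  fixes F :: "nat \<Rightarrow> real"
  assumes "\<And>n. (\<lambda>m. a n m) \<longlonglongrightarrow> F n" "\<And>n m. 0 \<le> a n m" "\<And>n m. a n m \<le> M"
  shows "bounded (range F)"
proof -
  have "0 \<le> F n \<and> F n \<le> M" for n
    using assms LIMSEQ_le_const[OF assms(1)[of n]] LIMSEQ_le_const2[OF assms(1)[of n]] by blast
  then have "norm (F n) \<le> M" for n by simp
  then show ?thesis unfolding bounded_iff by blast
qed

lemma double_limit:
  fixes d :: "'a::real_normed_vector \<Rightarrow> 'a \<Rightarrow> real"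
  assumes pm: "pseudometric d" and st: "stable_pseudometric d" and ce: "coarse_equivalence_Id d"
    and u: "bounded (range u)" and v: "bounded (range v)"
    and F: "\<And>n. (\<lambda>m. d (u n) (v m)) \<longlonglongrightarrow> F n"
    and G: "\<And>m. (\<lambda>n. d (u n) (v m)) \<longlonglongrightarrow> G m"
  shows "\<exists>L. F \<longlonglongrightarrow> L \<and> G \<longlonglongrightarrow> L"
proof -
  obtain M where M: "\<And>n m. d (u n) (v m) \<le> M" using d_bdd[OF ce u v] by blast
  have Fb: "bounded (range F)" by (rule lim_bounds[OF F]) (use d_nonneg[OF pm] M in auto)
  have Gb: "bounded (range G)" by (rule lim_bounds[OF G]) (use d_nonneg[OF pm] M in auto)
  have key: "\<alpha> = \<beta>" if r: "strict_mono r" and s: "strict_mono s" and a: "(F \<circ> r) \<longlonglongrightarrow> \<alpha>"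
    and b: "(G \<circ> s) \<longlonglongrightarrow> \<beta>" for r s :: "nat \<Rightarrow> nat" and \<alpha> \<beta>
  proof -
    have ur: "bounded (range (u \<circ> r))" using u by (rule bounded_subset) auto
    have vs: "bounded (range (v \<circ> s))" using v by (rule bounded_subset) auto
    have f1: "(\<lambda>m. d ((u \<circ> r) n) ((v \<circ> s) m)) \<longlonglongrightarrow> (F \<circ> r) n" for n
      using LIMSEQ_subseq_LIMSEQ[OF F[of "r n"] s] by (simp add: o_def)
    have g1: "(\<lambda>n. d ((u \<circ> r) n) ((v \<circ> s) m)) \<longlonglongrightarrow> (G \<circ> s) m" for m
      using LIMSEQ_subseq_LIMSEQ[OF G[of "s m"] r] by (simp add: o_def)
    show ?thesis using st unfolding stable_pseudometric_def
      using ur vs f1 g1 a b by blast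
  qed
  obtain \<beta> and s :: "nat \<Rightarrow> nat" where s: "strict_mono s" and b: "(G \<circ> s) \<longlonglongrightarrow> \<beta>"
    using bounded_imp_convergent_subsequence[OF Gb] by blast
  have FL: "F \<longlonglongrightarrow> \<beta>"
    by (rule subseq_lim[OF Fb]) (use key s b in blast)
  have "G \<longlonglongrightarrow> \<beta>"
  proof (rule subseq_lim[OF Gb])
    fix r :: "nat \<Rightarrow> nat" and \<alpha> assume "strict_mono r" "(G \<circ> r) \<longlonglongrightarrow> \<alpha>"
    then show "\<alpha> = \<beta>" using key[of id r \<beta> \<alpha>] FL by (simp add: strict_mono_def)
  qed
  then show ?thesis using FL by blast
qed

lemma tendsto_fun_iff:
  fixes f :: "'b \<Rightarrow> 'i \<Rightarrow> real"
  shows "(f \<longlongrightarrow> l) F \<longleftrightarrow> (\<forall>i. ((\<lambda>c. f c i) \<longlongrightarrow> l i) F)"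
  using limitin_componentwise[of "\<lambda>i. euclidean" UNIV f l F]
  by (simp add: euclidean_product_topology)

lemma closed_vanish: "closed {f :: 'i \<Rightarrow> real. \<forall>i. i \<notin> C \<longrightarrow> f i = 0}"
proof -
  have "open {f :: 'i \<Rightarrow> real. \<forall>j\<in>{i}. f (id j) \<in> -{0}}" for i
    by (rule product_topology_basis') auto
  hence "open (\<Union>i\<in>-C. {f :: 'i \<Rightarrow> real. \<forall>j\<in>{i}. f (id j) \<in> -{0}})" by auto
  moreover have "(\<Union>i\<in>-C. {f :: 'i \<Rightarrow> real. \<forall>j\<in>{i}. f (id j) \<in> -{0}}) = - {f :: 'i \<Rightarrow> real. \<forall>i. i \<notin> C \<longrightarrow> f i = 0}" by auto
  ultimately show ?thesis by (metis closed_def)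
qed

lemma inv_conv:
  fixes a :: "nat \<Rightarrow> real"
  assumes "\<And>n. n \<ge> j \<Longrightarrow> dist (a n) l < inverse (real (Suc n))"
  shows "a \<longlonglongrightarrow> l"
proof (rule tendstoI)
  fix e :: real assume "e > 0"
  then obtain N where N: "inverse (real (Suc N)) < e" using reals_Archimedean by blast
  have "dist (a n) l < e" if "n \<ge> max j N" for n
  proof -
    have "inverse (real (Suc n)) \<le> inverse (real (Suc N))" using that
      by (simp add: le_imp_inverse_le)
    then show ?thesis using assms[of n] that N by linarith
  qed
  then show "eventually (\<lambda>n. dist (a n) l < e) sequentially"
    unfolding eventually_sequentially by blast
qed

lemma nbhd_open:
  fixes g :: "'i \<Rightarrow> real" and n :: nat
  shows "open {f. \<forall>j\<in>{..n}. f (e j) \<in> ball (g (e j)) r}"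
  by (rule product_topology_basis') (auto simp: finite_atMost)

lemma seq_closure:
  fixes S :: "('i \<Rightarrow> real) set"
  assumes C: "countable C" "C \<noteq> {}" and SC: "S \<subseteq> {f. \<forall>i. i \<notin> C \<longrightarrow> f i = 0}" and g: "g \<in> closure S"
  shows "\<exists>s. (\<forall>n. s n \<in> S) \<and> s \<longlonglongrightarrow> g"
proof -
  define e where "e = from_nat_into C"
  have Ce: "C = range e" unfolding e_def using C by (simp add: range_from_nat_into)
  have gz: "\<And>i. i \<notin> C \<Longrightarrow> g i = 0"
    using closure_minimal[OF SC closed_vanish] g by blast
  have "\<exists>y. y \<in> S \<and> y \<in> {f. \<forall>j\<in>{..n}. f (e j) \<in> ball (g (e j)) (inverse (real (Suc n)))}" for n
  proof -
    have "S \<inter> {f. \<forall>j\<in>{..n}. f (e j) \<in> ball (g (e j)) (inverse (real (Suc n)))} \<noteq> {}"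
    proof -
      have "g \<in> {f. \<forall>j\<in>{..n}. f (e j) \<in> ball (g (e j)) (inverse (real (Suc n)))}" by simp
      then show ?thesis
        using g nbhd_open[of n e g "inverse (real (Suc n))"] unfolding closure_iff_nhds_not_empty
        by blast
    qed
    then show ?thesis by blast
  qed
  then have ex: "\<forall>n. \<exists>y. y \<in> S \<and> (\<forall>j\<in>{..n}. dist (y (e j)) (g (e j)) < inverse (real (Suc n)))"
    by (simp add: mem_ball dist_commute)
  obtain s where "\<forall>n. s n \<in> S \<and> (\<forall>j\<in>{..n}. dist (s n (e j)) (g (e j)) < inverse (real (Suc n)))"
    using choice[OF ex] by blast
  then have s: "\<And>n. s n \<in> S" and sn: "\<And>n. \<forall>j\<in>{..n}. dist (s n (e j)) (g (e j)) < inverse (real (Suc n))"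
    by blast+
  have "(\<lambda>n. s n i) \<longlonglongrightarrow> g i" for i
  proof (cases "i \<in> C")
    case True
    then obtain j where j: "i = e j" using Ce by blast
    show ?thesis unfolding j by (rule inv_conv[of j]) (use sn in auto)
  next
    case False
    then have "s n i = 0" for n using SC s[of n] by blast
    then show ?thesis using gz[OF False] by simp
  qed
  then show ?thesis using s tendsto_fun_iff by blast
qed

lemma seq_cont:
  fixes h :: "('i \<Rightarrow> real) \<Rightarrow> real"
  assumes C: "countable C" "C \<noteq> {}"
    and seq: "\<And>s t. (\<forall>k. s k \<in> T) \<Longrightarrow> t \<in> T \<Longrightarrow> (\<forall>i\<in>C. (\<lambda>k. s k i) \<longlonglongrightarrow> t i) \<Longrightarrow> (\<lambda>k. h (s k)) \<longlonglongrightarrow> h t"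
  shows "continuous_on T h"
  unfolding continuous_on_topological
proof (intro ballI allI impI)
  fix t B assume t: "t \<in> T" and B: "open B" "h t \<in> B"
  define e where "e = from_nat_into C"
  have Ce: "C = range e" unfolding e_def using C by (simp add: range_from_nat_into)
  show "\<exists>A. open A \<and> t \<in> A \<and> (\<forall>y\<in>T. y \<in> A \<longrightarrow> h y \<in> B)"
  proof (rule ccontr)
    assume no: "\<not> ?thesis"
    have "\<exists>y\<in>T. y \<in> {f. \<forall>j\<in>{..n}. f (e j) \<in> ball (t (e j)) (inverse (real (Suc n)))} \<and> h y \<notin> B" for n
    proof -
      have "t \<in> {f. \<forall>j\<in>{..n}. f (e j) \<in> ball (t (e j)) (inverse (real (Suc n)))}" by simp
      then show ?thesis using no nbhd_open[of n e t "inverse (real (Suc n))"] by blast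
    qed
    then have ex: "\<forall>n. \<exists>y. y \<in> T \<and> h y \<notin> B \<and> (\<forall>j\<in>{..n}. dist (y (e j)) (t (e j)) < inverse (real (Suc n)))"
      by (simp add: mem_ball dist_commute) blast
    obtain s where "\<forall>n. s n \<in> T \<and> h (s n) \<notin> B \<and> (\<forall>j\<in>{..n}. dist (s n (e j)) (t (e j)) < inverse (real (Suc n)))"
      using choice[OF ex] by blast
    then have s: "\<And>n. s n \<in> T" "\<And>n. h (s n) \<notin> B"
      and sn: "\<And>n. \<forall>j\<in>{..n}. dist (s n (e j)) (t (e j)) < inverse (real (Suc n))"
      by blast+
    have "\<forall>i\<in>C. (\<lambda>k. s k i) \<longlonglongrightarrow> t i"
    proof
      fix i assume "i \<in> C"
      then obtain j where j: "i = e j" using Ce by blast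
      show "(\<lambda>k. s k i) \<longlonglongrightarrow> t i" unfolding j by (rule inv_conv[of j]) (use sn in auto)
    qed
    then have "(\<lambda>k. h (s k)) \<longlonglongrightarrow> h t" using seq s t by blast
    then have "eventually (\<lambda>k. h (s k) \<in> B) sequentially" using B topological_tendstoD by blast
    then show False using s(2) by (meson eventually_sequentially order_refl)
  qed
qed



locale setting =
  fixes d :: "'a::real_normed_vector \<Rightarrow> 'a \<Rightarrow> real" and D :: "'a set"
  assumes pm: "pseudometric d" and ti: "translation_invariant d" and st: "stable_pseudometric d"
    and ce: "coarse_equivalence_Id d" and Dlin: "Q_linear_subspace D" and Dc: "countable D"
begin

lemma D0: "0 \<in> D" using Dlin unfolding Q_linear_subspace_def by blast

lemma D_diff: "z \<in> D \<Longrightarrow> x \<in> D \<Longrightarrow> z - of_rat q *\<^sub>R x \<in> D"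
proof -
  assume z: "z \<in> D" and x: "x \<in> D"
  have "of_rat (-q) *\<^sub>R x \<in> D" using Dlin x unfolding Q_linear_subspace_def by blast
  then have "z + of_rat (-q) *\<^sub>R x \<in> D" using Dlin z unfolding Q_linear_subspace_def by blast
  then show ?thesis by (simp add: of_rat_minus)
qed

lemma D_add: "x \<in> D \<Longrightarrow> y \<in> D \<Longrightarrow> x + y \<in> D"
  using Dlin unfolding Q_linear_subspace_def by blast

abbreviation "CC \<equiv> (UNIV :: rat set) \<times> D"

lemma CC_countable: "countable CC" using Dc by simp

lemma CC_ne: "CC \<noteq> {}" using D0 by blast

lemma T_vanish: "types_space d D \<subseteq> {f. \<forall>i. i \<notin> CC \<longrightarrow> f i = 0}"
proof -
  have "xbar d D ` D \<subseteq> {f. \<forall>i. i \<notin> CC \<longrightarrow> f i = 0}"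
    by (auto simp: xbar_def)
  then show ?thesis unfolding types_space_def using closed_vanish by (rule closure_minimal)
qed

lemma def_exists:
  assumes "\<sigma> \<in> types_space d D"
  shows "\<exists>x. defining_seq d D \<sigma> x"
proof -
  have "xbar d D ` D \<subseteq> {f. \<forall>i. i \<notin> CC \<longrightarrow> f i = 0}"
    by (auto simp: xbar_def)
  then obtain s where s: "\<And>n. s n \<in> xbar d D ` D" and lim: "s \<longlonglongrightarrow> \<sigma>"
    using seq_closure[OF CC_countable CC_ne _ assms[unfolded types_space_def]] by blast
  have "\<forall>n. \<exists>x. x \<in> D \<and> s n = xbar d D x" using s by blast
  then obtain x where "\<forall>n. x n \<in> D \<and> s n = xbar d D (x n)" using choice by metis
  then show ?thesis unfolding defining_seq_def using lim by (metis (no_types, lifting) ext)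
qed

lemma def_coord:
  assumes "defining_seq d D \<sigma> x" "w \<in> D"
  shows "(\<lambda>n. d (of_rat q *\<^sub>R x n) w) \<longlonglongrightarrow> \<sigma> (q, w)"
proof -
  have "(\<lambda>n. xbar d D (x n) (q, w)) \<longlonglongrightarrow> \<sigma> (q, w)"
    using assms(1) unfolding defining_seq_def tendsto_fun_iff by blast
  then show ?thesis using assms(2) by (simp add: xbar_def)
qed

lemma def_bounded:
  assumes "defining_seq d D \<sigma> x"
  shows "bounded (range x)"
proof -
  have "(\<lambda>n. d (x n) 0) \<longlonglongrightarrow> \<sigma> (1, 0)" using def_coord[OF assms D0, of 1] by simp
  then have "Bseq (\<lambda>n. d (x n) 0)" using convergent_imp_Bseq convergent_def by blast
  then obtain K where "\<And>n. norm (d (x n) 0) \<le> K" using Bseq_def by metis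
  then have "\<And>n. d (x n) 0 \<le> K" by (smt (verit) real_norm_def)
  then show ?thesis using bounded_of_dbound[OF pm ce] by blast
qed

lemma bounded_scale:
  fixes x :: "nat \<Rightarrow> 'a"
  assumes "bounded (range x)"
  shows "bounded (range (\<lambda>n. z - c *\<^sub>R x n))"
proof -
  obtain B where B: "\<And>n. norm (x n) \<le> B" using assms unfolding bounded_iff by blast
  have "norm (z - c *\<^sub>R x n) \<le> norm z + \<bar>c\<bar> * B" for n
  proof -
    have "norm (z - c *\<^sub>R x n) \<le> norm z + norm (c *\<^sub>R x n)" by (rule norm_triangle_ineq4)
    also have "norm (c *\<^sub>R x n) \<le> \<bar>c\<bar> * B" using B[of n] by (simp add: mult_left_mono)
    finally show ?thesis by simp
  qed
  then show ?thesis unfolding bounded_iff by blast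
qed

lemma bounded_scale': "bounded (range (x :: nat \<Rightarrow> 'a)) \<Longrightarrow> bounded (range (\<lambda>n. c *\<^sub>R x n))"
  using bounded_scale[of x 0 "-c"] by simp

lemma swap: "d (c *\<^sub>R a) (z - c *\<^sub>R b) = d (c *\<^sub>R b) (z - c *\<^sub>R a)"
proof -
  have "d (c *\<^sub>R a) (z - c *\<^sub>R b) = d (c *\<^sub>R a + c *\<^sub>R b) z" using d_shift[OF ti] by metis
  also have "\<dots> = d (c *\<^sub>R b + c *\<^sub>R a) z" by (simp add: add.commute)
  also have "\<dots> = d (c *\<^sub>R b) (z - c *\<^sub>R a)" using d_shift[OF ti] by metis
  finally show ?thesis .
qed

lemma core:
  assumes x: "defining_seq d D \<sigma> x" and y: "defining_seq d D \<tau> y" and z: "z \<in> D"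
  shows "\<exists>L. (\<lambda>n. \<tau> (q, z - of_rat q *\<^sub>R x n)) \<longlonglongrightarrow> L \<and> (\<lambda>m. \<sigma> (q, z - of_rat q *\<^sub>R y m)) \<longlonglongrightarrow> L"
proof -
  let ?c = "of_rat q :: real"
  have xD: "x n \<in> D" and yD: "y n \<in> D" for n using x y unfolding defining_seq_def by auto
  have ub: "bounded (range (\<lambda>n. ?c *\<^sub>R x n))" using bounded_scale' def_bounded[OF x] by blast
  have vb: "bounded (range (\<lambda>m. z - ?c *\<^sub>R y m))" using bounded_scale def_bounded[OF y] by blast
  have F: "(\<lambda>m. d (?c *\<^sub>R x n) (z - ?c *\<^sub>R y m)) \<longlonglongrightarrow> \<tau> (q, z - ?c *\<^sub>R x n)" for n
  proof -
    have e: "(\<lambda>m. d (?c *\<^sub>R x n) (z - ?c *\<^sub>R y m)) = (\<lambda>m. d (?c *\<^sub>R y m) (z - ?c *\<^sub>R x n))"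
      by (rule ext) (rule swap)
    show ?thesis unfolding e using def_coord[OF y D_diff[OF z xD[of n]], of q] .
  qed
  have G: "(\<lambda>n. d (?c *\<^sub>R x n) (z - ?c *\<^sub>R y m)) \<longlonglongrightarrow> \<sigma> (q, z - ?c *\<^sub>R y m)" for m
    using def_coord[OF x D_diff[OF z yD, of q], of q] .
  show ?thesis using double_limit[OF pm st ce ub vb F G] .
qed

lemma conv_spec:
  assumes \<sigma>T: "\<sigma> \<in> types_space d D" and \<tau>T: "\<tau> \<in> types_space d D"
  shows "conv d D \<sigma> \<tau> \<in> types_space d D
    \<and> (\<forall>x. defining_seq d D \<sigma> x \<longrightarrow> (\<forall>q z. z \<in> D \<longrightarrow> (\<lambda>n. \<tau> (q, z - of_rat q *\<^sub>R x n)) \<longlonglongrightarrow> conv d D \<sigma> \<tau> (q, z)))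
    \<and> (\<forall>y. defining_seq d D \<tau> y \<longrightarrow> (\<forall>q z. z \<in> D \<longrightarrow> (\<lambda>m. \<sigma> (q, z - of_rat q *\<^sub>R y m)) \<longlonglongrightarrow> conv d D \<sigma> \<tau> (q, z)))
    \<and> (\<forall>q z. z \<notin> D \<longrightarrow> conv d D \<sigma> \<tau> (q, z) = 0)"
proof -
  obtain x0 where x0: "defining_seq d D \<sigma> x0" using def_exists[OF \<sigma>T] by blast
  obtain y0 where y0: "defining_seq d D \<tau> y0" using def_exists[OF \<tau>T] by blast
  define \<rho> where "\<rho> = (\<lambda>(q,z). if z \<in> D then lim (\<lambda>n. \<tau> (q, z - of_rat q *\<^sub>R x0 n)) else 0)"
  have limx: "(\<lambda>n. \<tau> (q, z - of_rat q *\<^sub>R x n)) \<longlonglongrightarrow> \<rho> (q,z)"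
    if x: "defining_seq d D \<sigma> x" and z: "z \<in> D" for x q z
  proof -
    obtain L where L1: "(\<lambda>n. \<tau> (q, z - of_rat q *\<^sub>R x n)) \<longlonglongrightarrow> L"
      and L2: "(\<lambda>m. \<sigma> (q, z - of_rat q *\<^sub>R y0 m)) \<longlonglongrightarrow> L"
      using core[OF x y0 z] by blast
    obtain L' where L1': "(\<lambda>n. \<tau> (q, z - of_rat q *\<^sub>R x0 n)) \<longlonglongrightarrow> L'"
      and L2': "(\<lambda>m. \<sigma> (q, z - of_rat q *\<^sub>R y0 m)) \<longlonglongrightarrow> L'"
      using core[OF x0 y0 z] by blast
    have "L = L'" using L2 L2' LIMSEQ_unique by blast
    moreover have "\<rho> (q,z) = L'" using z L1' by (simp add: \<rho>_def limI)
    ultimately show ?thesis using L1 by simp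
  qed
  have limy: "(\<lambda>m. \<sigma> (q, z - of_rat q *\<^sub>R y m)) \<longlonglongrightarrow> \<rho> (q,z)"
    if y: "defining_seq d D \<tau> y" and z: "z \<in> D" for y q z
  proof -
    obtain L where L1: "(\<lambda>n. \<tau> (q, z - of_rat q *\<^sub>R x0 n)) \<longlonglongrightarrow> L"
      and L2: "(\<lambda>m. \<sigma> (q, z - of_rat q *\<^sub>R y m)) \<longlonglongrightarrow> L"
      using core[OF x0 y z] by blast
    have "L = \<rho> (q,z)" using L1 limx[OF x0 z] LIMSEQ_unique by blast
    then show ?thesis using L2 by simp
  qed
  define fn where "fn x n = (\<lambda>(q,z). if z \<in> D then \<tau> (q, z - of_rat q *\<^sub>R x n) else 0)" for x :: "nat \<Rightarrow> 'a" and n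
  have inner: "(\<lambda>m. xbar d D (x n + y m)) \<longlonglongrightarrow> fn x n"
    if x: "defining_seq d D \<sigma> x" and y: "defining_seq d D \<tau> y" for x y n
    unfolding tendsto_fun_iff
  proof
    fix i show "(\<lambda>m. xbar d D (x n + y m) i) \<longlonglongrightarrow> fn x n i"
    proof (cases i)
      case (Pair q z)
      show ?thesis
      proof (cases "z \<in> D")
        case True
        have xD: "x n \<in> D" using x unfolding defining_seq_def by blast
        have e: "xbar d D (x n + y m) i = d (of_rat q *\<^sub>R y m) (z - of_rat q *\<^sub>R x n)" for m
        proof -
          have "xbar d D (x n + y m) i = d (of_rat q *\<^sub>R x n + of_rat q *\<^sub>R y m) z"
            using True Pair by (simp add: xbar_def scaleR_add_right)
          also have "\<dots> = d (of_rat q *\<^sub>R x n) (z - of_rat q *\<^sub>R y m)" using d_shift[OF ti] by metis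
          also have "\<dots> = d (of_rat q *\<^sub>R y m) (z - of_rat q *\<^sub>R x n)" by (rule swap)
          finally show ?thesis .
        qed
        show ?thesis unfolding e using def_coord[OF y D_diff[OF True xD], of q] True Pair
          by (simp add: fn_def)
      next
        case False
        then show ?thesis using Pair by (simp add: xbar_def fn_def)
      qed
    qed
  qed
  have outer: "fn x \<longlonglongrightarrow> \<rho>" if x: "defining_seq d D \<sigma> x" for x
    unfolding tendsto_fun_iff
  proof
    fix i show "(\<lambda>n. fn x n i) \<longlonglongrightarrow> \<rho> i"
    proof (cases i)
      case (Pair q z)
      then show ?thesis using limx[OF x, of z q] by (cases "z \<in> D") (simp_all add: fn_def \<rho>_def)
    qed
  qed
  define P where "P r = (\<forall>x y. defining_seq d D \<sigma> x \<and> defining_seq d D \<tau> y \<longrightarrow>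
      (\<exists>f. (\<forall>n. (\<lambda>m. xbar d D (x n + y m)) \<longlonglongrightarrow> f n) \<and> f \<longlonglongrightarrow> r))" for r
  have P\<rho>: "P \<rho>" unfolding P_def using inner outer by blast
  have uniq: "r = \<rho>" if Pr: "P r" for r
  proof -
    obtain f where f1: "\<And>n. (\<lambda>m. xbar d D (x0 n + y0 m)) \<longlonglongrightarrow> f n" and f2: "f \<longlonglongrightarrow> r"
      using Pr x0 y0 unfolding P_def by blast
    have "f n = fn x0 n" for n
    proof
      fix i
      show "f n i = fn x0 n i"
        using f1[of n] inner[OF x0 y0, of n] LIMSEQ_unique unfolding tendsto_fun_iff by blast
    qed
    then have "f = fn x0" by blast
    show "r = \<rho>"
    proof
      fix i
      show "r i = \<rho> i"
        using f2 outer[OF x0] \<open>f = fn x0\<close> LIMSEQ_unique unfolding tendsto_fun_iff by blast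
    qed
  qed
  have "conv d D \<sigma> \<tau> = (THE r. P r)" unfolding conv_def P_def by (rule refl)
  also have "\<dots> = \<rho>" by (rule the_equality[of P \<rho>, OF P\<rho> uniq])
  finally have cv: "conv d D \<sigma> \<tau> = \<rho>" .
  have mem: "\<rho> \<in> types_space d D"
  proof -
    have "fn x0 n \<in> types_space d D" for n
      unfolding types_space_def
    proof (rule Lim_in_closed_set[OF closed_closure _ _ inner[OF x0 y0]])
      show "\<forall>\<^sub>F m in sequentially. xbar d D (x0 n + y0 m) \<in> closure (xbar d D ` D)"
      proof (rule always_eventually, rule allI)
        fix m
        have "x0 n + y0 m \<in> D" using x0 y0 D_add unfolding defining_seq_def by blast
        then show "xbar d D (x0 n + y0 m) \<in> closure (xbar d D ` D)"
          by (intro closure_subset[THEN subsetD] imageI)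
      qed
    qed simp
    then show ?thesis unfolding types_space_def
      by (intro Lim_in_closed_set[OF closed_closure _ _ outer[OF x0]]) auto
  qed
  show ?thesis unfolding cv
  proof (intro conjI allI impI)
    show "\<rho> \<in> types_space d D" by (rule mem)
  next
    fix x q z assume "defining_seq d D \<sigma> x" "z \<in> D"
    then show "(\<lambda>n. \<tau> (q, z - of_rat q *\<^sub>R x n)) \<longlonglongrightarrow> \<rho> (q, z)" by (rule limx)
  next
    fix y q z assume "defining_seq d D \<tau> y" "z \<in> D"
    then show "(\<lambda>m. \<sigma> (q, z - of_rat q *\<^sub>R y m)) \<longlonglongrightarrow> \<rho> (q, z)" by (rule limy)
  next
    fix q z assume "z \<notin> D"
    then show "\<rho> (q, z) = 0" by (simp add: \<rho>_def)
  qed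
qed

lemma conv_comm:
  assumes \<sigma>T: "\<sigma> \<in> types_space d D" and \<tau>T: "\<tau> \<in> types_space d D"
  shows "conv d D \<sigma> \<tau> = conv d D \<tau> \<sigma>"
proof
  fix i show "conv d D \<sigma> \<tau> i = conv d D \<tau> \<sigma> i"
  proof (cases i)
    case (Pair q z)
    show ?thesis
    proof (cases "z \<in> D")
      case True
      obtain x where x: "defining_seq d D \<sigma> x" using def_exists[OF \<sigma>T] by blast
      have 1: "(\<lambda>n. \<tau> (q, z - of_rat q *\<^sub>R x n)) \<longlonglongrightarrow> conv d D \<sigma> \<tau> (q, z)"
        using conv_spec[OF \<sigma>T \<tau>T] x True by blast
      have 2: "(\<lambda>n. \<tau> (q, z - of_rat q *\<^sub>R x n)) \<longlonglongrightarrow> conv d D \<tau> \<sigma> (q, z)"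
        using conv_spec[OF \<tau>T \<sigma>T] x True by blast
      show ?thesis using 1 2 LIMSEQ_unique Pair by blast
    next
      case False
      then show ?thesis using conv_spec[OF \<sigma>T \<tau>T] conv_spec[OF \<tau>T \<sigma>T] Pair by simp
    qed
  qed
qed

lemma diff_to_zero:
  fixes a b :: "nat \<Rightarrow> real"
  assumes "\<And>k. k \<ge> j \<Longrightarrow> dist (a k) (b k) < inverse (real (Suc k))" "b \<longlonglongrightarrow> L"
  shows "a \<longlonglongrightarrow> L"
proof -
  have "(\<lambda>k. a k - b k) \<longlonglongrightarrow> 0"
    by (rule inv_conv[of j]) (use assms(1) in \<open>simp add: dist_real_def\<close>)
  then have "(\<lambda>k. (a k - b k) + b k) \<longlonglongrightarrow> 0 + L" using assms(2) by (rule tendsto_add)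
  then show ?thesis by simp
qed

lemma cont_right:
  assumes \<sigma>T: "\<sigma> \<in> types_space d D"
  shows "continuous_on (types_space d D) (\<lambda>\<tau>. conv d D \<sigma> \<tau>)"
proof (rule continuous_on_coordinatewise_then_product)
  fix i :: "rat \<times> 'a"
  obtain q z where i: "i = (q, z)" by (cases i)
  let ?c = "of_rat q :: real"
  show "continuous_on (types_space d D) (\<lambda>\<tau>. conv d D \<sigma> \<tau> i)"
  proof (rule seq_cont[OF CC_countable CC_ne])
    fix s \<tau> assume sT: "\<forall>k. s k \<in> types_space d D" and \<tau>T: "\<tau> \<in> types_space d D"
      and sconv: "\<forall>i\<in>CC. (\<lambda>k. s k i) \<longlonglongrightarrow> \<tau> i"
    show "(\<lambda>k. conv d D \<sigma> (s k) i) \<longlonglongrightarrow> conv d D \<sigma> \<tau> i"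
    proof (cases "z \<in> D")
      case False
      then show ?thesis using conv_spec[OF \<sigma>T \<tau>T] conv_spec[OF \<sigma>T sT[rule_format]] i by simp
    next
      case z: True
      obtain x where x: "defining_seq d D \<sigma> x" using def_exists[OF \<sigma>T] by blast
      have xD: "\<And>n. x n \<in> D" using x unfolding defining_seq_def by blast
      have "\<forall>k. \<exists>y. defining_seq d D (s k) y" using def_exists sT by blast
      then obtain Y where Y: "\<And>k. defining_seq d D (s k) (Y k)" by metis
      have YD: "\<And>k m. Y k m \<in> D" using Y unfolding defining_seq_def by blast
      define P where "P k m = (dist (\<sigma> (q, z - ?c *\<^sub>R Y k m)) (conv d D \<sigma> (s k) (q, z)) < inverse (real (Suc k))
         \<and> (\<forall>n\<in>{..k}. dist (d (?c *\<^sub>R Y k m) (z - ?c *\<^sub>R x n)) (s k (q, z - ?c *\<^sub>R x n)) < inverse (real (Suc k)))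
         \<and> dist (d (Y k m) 0) (s k (1, 0)) < 1)" for k m
      have ev: "eventually (P k) sequentially" for k
      proof -
        have pos: "inverse (real (Suc k)) > 0" by simp
        have e1: "eventually (\<lambda>m. dist (\<sigma> (q, z - ?c *\<^sub>R Y k m)) (conv d D \<sigma> (s k) (q, z)) < inverse (real (Suc k))) sequentially"
          using conv_spec[OF \<sigma>T sT[rule_format, of k]] Y[of k] z pos tendstoD by blast
        have e2: "eventually (\<lambda>m. \<forall>n\<in>{..k}. dist (d (?c *\<^sub>R Y k m) (z - ?c *\<^sub>R x n)) (s k (q, z - ?c *\<^sub>R x n)) < inverse (real (Suc k))) sequentially"
        proof (rule eventually_ball_finite)
          show "finite {..k}" by simp
          show "\<forall>n\<in>{..k}. eventually (\<lambda>m. dist (d (?c *\<^sub>R Y k m) (z - ?c *\<^sub>R x n)) (s k (q, z - ?c *\<^sub>R x n)) < inverse (real (Suc k))) sequentially"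
            using def_coord[OF Y[of k] D_diff[OF z xD], of q] pos tendstoD by blast
        qed
        have e3: "eventually (\<lambda>m. dist (d (Y k m) 0) (s k (1, 0)) < 1) sequentially"
          using def_coord[OF Y[of k] D0, of 1] tendstoD[of _ _ _ 1] by simp
        show ?thesis unfolding P_def using e1 e2 e3 by (simp add: eventually_conj_iff)
      qed
      have "\<forall>k. \<exists>m. P k m" using ev eventually_sequentially by (metis order_refl)
      then obtain M where M: "\<And>k. P k (M k)" by metis
      define y' where "y' k = Y k (M k)" for k
      have y'D: "\<And>k. y' k \<in> D" using YD unfolding y'_def by blast
      have p1: "\<And>k. dist (\<sigma> (q, z - ?c *\<^sub>R y' k)) (conv d D \<sigma> (s k) (q, z)) < inverse (real (Suc k))"
        using M unfolding P_def y'_def by blast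
      have p2: "\<And>k n. n \<le> k \<Longrightarrow> dist (d (?c *\<^sub>R y' k) (z - ?c *\<^sub>R x n)) (s k (q, z - ?c *\<^sub>R x n)) < inverse (real (Suc k))"
        using M unfolding P_def y'_def by blast
      have p3: "\<And>k. dist (d (y' k) 0) (s k (1, 0)) < 1"
        using M unfolding P_def y'_def by blast
      have "(1, 0) \<in> CC" using D0 by simp
      then have "(\<lambda>k. s k (1, 0)) \<longlonglongrightarrow> \<tau> (1, 0)" using sconv by blast
      then have "Bseq (\<lambda>k. s k (1, 0))" using convergent_imp_Bseq convergent_def by blast
      then obtain K where K: "\<And>k. norm (s k (1, 0)) \<le> K" using Bseq_def by metis
      have "d (y' k) 0 \<le> K + 1" for k using K[of k] p3[of k] by (simp add: dist_real_def abs_le_iff abs_less_iff)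
      then have y'b: "bounded (range y')" using bounded_of_dbound[OF pm ce] by blast
      have ub: "bounded (range (\<lambda>k. ?c *\<^sub>R y' k))" using bounded_scale'[OF y'b] .
      have vb: "bounded (range (\<lambda>n. z - ?c *\<^sub>R x n))" using bounded_scale[OF def_bounded[OF x]] .
      have F: "(\<lambda>n. d (?c *\<^sub>R y' k) (z - ?c *\<^sub>R x n)) \<longlonglongrightarrow> \<sigma> (q, z - ?c *\<^sub>R y' k)" for k
      proof -
        have e: "(\<lambda>n. d (?c *\<^sub>R y' k) (z - ?c *\<^sub>R x n)) = (\<lambda>n. d (?c *\<^sub>R x n) (z - ?c *\<^sub>R y' k))"
          by (rule ext) (rule swap)
        show ?thesis unfolding e using def_coord[OF x D_diff[OF z y'D[of k]], of q] .
      qed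
      have G: "(\<lambda>k. d (?c *\<^sub>R y' k) (z - ?c *\<^sub>R x n)) \<longlonglongrightarrow> \<tau> (q, z - ?c *\<^sub>R x n)" for n
      proof (rule diff_to_zero[of n])
        show "\<And>k. n \<le> k \<Longrightarrow> dist (d (?c *\<^sub>R y' k) (z - ?c *\<^sub>R x n)) (s k (q, z - ?c *\<^sub>R x n)) < inverse (real (Suc k))"
          by (rule p2)
        have "(q, z - ?c *\<^sub>R x n) \<in> CC" using D_diff[OF z xD] by simp
        then show "(\<lambda>k. s k (q, z - ?c *\<^sub>R x n)) \<longlonglongrightarrow> \<tau> (q, z - ?c *\<^sub>R x n)" using sconv by blast
      qed
      obtain L where L1: "(\<lambda>k. \<sigma> (q, z - ?c *\<^sub>R y' k)) \<longlonglongrightarrow> L" and L2: "(\<lambda>n. \<tau> (q, z - ?c *\<^sub>R x n)) \<longlonglongrightarrow> L"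
        using double_limit[OF pm st ce ub vb F G] by blast
      have "(\<lambda>n. \<tau> (q, z - ?c *\<^sub>R x n)) \<longlonglongrightarrow> conv d D \<sigma> \<tau> (q, z)"
        using conv_spec[OF \<sigma>T \<tau>T] x z by blast
      then have LL: "L = conv d D \<sigma> \<tau> (q, z)" using L2 LIMSEQ_unique by blast
      have "(\<lambda>k. conv d D \<sigma> (s k) (q, z)) \<longlonglongrightarrow> L"
        by (rule diff_to_zero[of 0, OF _ L1]) (use p1 in \<open>simp add: dist_commute\<close>)
      then show ?thesis using LL i by simp
    qed
  qed
qed

end

theorem lemma4p5:
  fixes d :: "'a::banach \<Rightarrow> 'a \<Rightarrow> real" and \<Delta> :: "'a set"
  assumes separable: "\<exists>C::'a set. countable C \<and> closure C = UNIV"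
    and inf_dim: "\<not> (\<exists>B::'a set. finite B \<and> span B = UNIV)"
    and pm: "pseudometric d"
    and ti: "translation_invariant d"
    and st: "stable_pseudometric d"
    and ce: "coarse_equivalence_Id d"
    and Dcount: "countable \<Delta>"
    and Ddense: "closure \<Delta> = UNIV"
    and Dlin: "Q_linear_subspace \<Delta>"
  shows "(\<forall>\<sigma>\<in>types_space d \<Delta>. \<forall>\<tau>\<in>types_space d \<Delta>. conv d \<Delta> \<sigma> \<tau> \<in> types_space d \<Delta>)
    \<and> (\<forall>\<sigma>\<in>types_space d \<Delta>. continuous_on (types_space d \<Delta>) (\<lambda>\<tau>. conv d \<Delta> \<sigma> \<tau>))
    \<and> (\<forall>\<tau>\<in>types_space d \<Delta>. continuous_on (types_space d \<Delta>) (\<lambda>\<sigma>. conv d \<Delta> \<sigma> \<tau>))"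
proof -
  interpret S: setting d \<Delta>
    by (unfold_locales) (rule pm, rule ti, rule st, rule ce, rule Dlin, rule Dcount)
  have 1: "\<forall>\<sigma>\<in>types_space d \<Delta>. \<forall>\<tau>\<in>types_space d \<Delta>. conv d \<Delta> \<sigma> \<tau> \<in> types_space d \<Delta>"
    using S.conv_spec by blast
  have 2: "\<forall>\<sigma>\<in>types_space d \<Delta>. continuous_on (types_space d \<Delta>) (\<lambda>\<tau>. conv d \<Delta> \<sigma> \<tau>)"
    using S.cont_right by blast
  have 3: "continuous_on (types_space d \<Delta>) (\<lambda>\<sigma>. conv d \<Delta> \<sigma> \<tau>)" if \<tau>T: "\<tau> \<in> types_space d \<Delta>" for \<tau>
  proof -
    have "continuous_on (types_space d \<Delta>) (\<lambda>\<sigma>. conv d \<Delta> \<tau> \<sigma>)" using S.cont_right[OF \<tau>T] .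
    then show ?thesis
      by (rule continuous_on_cong[THEN iffD1, rotated 2]) (auto simp: S.conv_comm[OF _ \<tau>T])
  qed
  show ?thesis using 1 2 3 by blast
qed

end
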